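(* Let $a,b,c,p\in\mathbb{C}$ with $-c\notin\mathbb{N}\cup\{0\}$ and $c\neq2$. Suppose that $\sinh(pz)F(a,b;c;z)=\sum_{n=0}^\infty u_nz^n$ for $|z|<1$. Then $u_0=0$, $u_1=p$, $u_2=\frac{abp}{c}$, $u_3=\frac{(a)_2(b)_2p}{2(c)_2}+\frac{p^3}{6}$, $u_4=\frac{abp^3}{6c}+\frac{(a)_3(b)_3p}{6(c)_3}$, $u_5=\frac{(a)_2(b)_2p^3}{12(c)_2}+\frac{(a)_4(b)_4p}{24(c)_4}+\frac{p^5}{120}$, $u_6=\frac{abp^5}{120c}+\frac{(a)_3(b)_3p^3}{36(c)_3}+\frac{(a)_5(b)_5p}{120(c)_5}$, $u_7=\frac{(a)_2(b)_2p^5}{240(c)_2}+\frac{(a)_4(b)_4p^3}{144(c)_4}+\frac{(a)_6(b)_6p}{720(c)_6}+\frac{p^7}{5040}$, $u_8=\frac{abp^7}{5040c}+\frac{(a)_3(b)_3p^5}{720(c)_3}+\frac{(a)_5(b)_5p^3}{720(c)_5}+\frac{(a)_7(b)_7p}{5040(c)_7}$, $u_9=\frac{(a)_2(b)_2p^7}{10080(c)_2}+\frac{(a)_4(b)_4p^5}{2880(c)_4}+\frac{(a)_6(b)_6p^3}{4320(c)_6}+\frac{(a)_8(b)_8p}{40320(c)_8}+\frac{p^9}{362880}$, and for all integers $n\ge9$, \[ u_{n+1}=\sum_{i=0}^9\delta_i(n)u_{n-i}, \] where $D(n)=(c-2)c\,n(n+1)(c+n-1)(c+n)$ and \[ \delta_0(n)=\frac{2(n-1)^2\left(a(c-2b)+c(b+c-3)\right)+4(c-2)(n-1)\left(c(a+b)-ab\right)+2ab(c-2)(c+1)}{(c-2)c(n+1)(c+n)},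 \] \[ \begin{aligned} \delta_1(n)=\frac{1}{D(n)}\Big[&-(n-4)(n-3)(n-2)(n-1)\left(a^2+4c(a+b)-10ab+b^2+c^2-6c-4p^2-1\right)\\ &+2(n-3)(n-2)(n-1)\Big(a^2(4b-3c)+a\left(2(b-1)c+4b(b+3)-3c^2\right)-c\left(b(3b+3c+2)+c-4p^2-13\right)\Big)\\ &+(n-2)(n-1)\Big(a^2\left(8b^2+b(4c+6)-6c^2+c\right)+a\left(-(10b+7)c^2+4(b(b+3)+3)c+6b(b+1)\right)\\ &\qquad+c\left(b^2(1-6c)+b(12-7c)+6(c-2)p^2+c+11\right)\Big)\\ &+(c-2)\left(a^2b(c-b(c+2))+ab(b+1)c+c^2(c+1)p^2\right)\\ &+2(n-1)\left(a^2b(b(4c-2)-3(c-1)c)-abc(3b(c-1)+c-5)+(c-2)c(c+1)p^2\right)\Big], \end{aligned} \] \[ \begin{aligned} \delta_2(n)=\frac{2}{D(n)}\Big[&(n-5)(n-4)(n-3)(n-2)\left(a^2+a(c-4b)+(b-1)(b+c+1)-8p^2\right)\\ &+(n-4)(n-3)(n-2)\Big(a^3+a^2(-5b+3c+2)-a\left(b(5b-2c+14)-3c+4p^2+1\right)+(b+3c+1)\left(b^2+b-4p^2-2\right)\Big)\\ &-(n-3)(n-2)\Big(a^3(b-2c)+a^2(b(10b+9)-4(b+1)c)+a\left(b(b+1)(b-4c+8)+6cp^2+2c\right)\\ &\qquad+2c\left(-b^3-2b^2+3p^2(b+c-3)+b+2\right)\Big)\\ &-(n-2)\Big(a^3b(4b-3c+2)+a^2b(2b+1)(2b-c)-a\left(p^2(10b-3c^2+c)+(b-1)b(b(3c-2)+4c-2)\right)\\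 &\qquad+cp^2\left(b(3c-1)+c^2-9\right)\Big)\\ &-(c+1)p^2\left(c^2(2a+2b+1)-3(a+1)(b+1)c+4ab\right)\\ &-(a-1)a(b-1)b\left(-c(a+b+1)+2ab+a+b+1\right)\Big], \end{aligned} \] \[ \begin{aligned} \delta_3(n)=-\frac{1}{D(n)}\Big[&(n-6)(n-5)(n-4)(n-3)\left((a-b)^2-24p^2-1\right)\\ &+2(n-5)(n-4)(n-3)\Big(a^3-a^2(b-2)-a\left(b(b+4)+12p^2+1\right)+b^3+2b^2-12p^2(b+c+1)-b-2\Big)\\ &+(n-4)(n-3)\Big(a^4+a^3(2b+3)-a^2\left(6b^2+3b+6p^2-1\right)+a\left(-12p^2(b+2c)+b(b(2b-3)-8)-3\right)\\ &\qquad-6p^2\left(b^2+4bc+(c-6)c-1\right)+(b+1)^2\left(b^2+b-2\right)+8p^4\Big)\\ &+2(n-3)\Big(-p^2\left(c^2(3a+3b+1)+c(a+b)(3a+3b+2)-40ab-13c\right)+ab(a-b-1)(a-b+1)(a+b)+4cp^4\Big)\\ &+a^4(b-1)b+a^3b(-2b^2+b+1)+a^2\left(b^4+b^3+p^2\left(-12b^2+2b(6c+5)-6c^2+c\right)-3b^2+b\right)\\ &+ap^2\left(-(6b+7)c^2+4(b(3b+2)+3)c+2b(5b-11)\right)\\ &-a(b-1)^2b(b+1)+cp^2\left(b^2(1-6c)+b(12-7c)+5(c-2)p^2+c+11\right)\Big], \end{aligned} \] \[ \begin{aligned} \delta_4(n)=\frac{2p^2}{D(n)}\Big[&-8(n-7)(n-6)(n-5)(n-4)-4(n-6)(n-5)(n-4)\left(3(a+b+1)+c\right)\\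 &+2(n-5)(n-4)\left(8p^2-3(a+b-1)(a+b+c+1)\right)\\ &+(n-4)\Big(-a^3-a^2(3b+3c+2)+a\left(b(-3b-6c+46)-3c+4p^2+1\right)-(b+3c+1)\left(b^2+b-4p^2-2\right)\Big)\\ &+a^3(3b-2c)+a^2(3(5-2b)b-4c)+a\left(p^2(5c-6b)-4bc+3b(b(b+5)-4)+2c\right)\\ &+5cp^2(b+c-3)-2(b-1)(b+1)(b+2)c\Big], \end{aligned} \] \[ \begin{aligned} \delta_5(n)=\frac{p^2}{D(n)}\Big[&4(n-8)(n-7)(n-6)(n-5)+8(n-7)(n-6)(n-5)(a+b+1)\\ &+6(n-6)(n-5)\left((a+b)^2-8p^2-1\right)\\ &-2(n-5)\left(-a^3-3a^2b-2a^2-3ab^2+12p^2(a+b+c+1)+16ab+a-b^3-2b^2+b+2\right)\\ &+a^4+a^3(3-2b)+a^2\left(b(6b-11)-5p^2+1\right)-a\left(2b^3+11b^2-2b(13p^2+6)+20cp^2+3\right)\\ &-5p^2\left(b^2+4bc+(c-6)c-1\right)+(b+1)^2\left(b^2+b-2\right)+4p^4\Big], \end{aligned} \] \[ \delta_6(n)=\frac{2p^4\left(5a^2+a(-8b+5c+12n-72)+5b^2+5bc+12b(n-6)+4n(c+4n)-29c-196n-8p^2+595\right)}{D(n)}, \] \[ \delta_7(n)=\frac{p^4\left(-5a^2+2a(b-4n+28)-5b^2-8b(n-7)-8(n-14)n+24p^2-387\right)}{D(n)}, \] \[ \delta_8(n)=-\frac{16p^6}{D(n)},\qquad \delta_9(n)=\frac{4p^6}{D(n)}.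 \]
   Context: For $a\in\mathbb{C}$, $(a)_n=a(a+1)\cdots(a+n-1)$ denotes the Pochhammer symbol, with $(a)_0=1$. For $a,b,c\in\mathbb{C}$ with $-c\notin\mathbb{N}\cup\{0\}$, the Gaussian hypergeometric function is $F(a,b;c;z)=\sum_{n=0}^\infty \frac{(a)_n(b)_n}{(c)_n\,n!}z^n$, $|z|<1$. *)

theory Defs
  imports "HOL-Analysis.Analysis"
begin

definition hyp2F1 :: "complex \<Rightarrow> complex \<Rightarrow> complex \<Rightarrow> complex \<Rightarrow> complex" where
  "hyp2F1 a b c z =
     (\<Sum>n. pochhammer a n * pochhammer b n / (pochhammer c n * fact n) * z ^ n)"

definition Dfun :: "complex \<Rightarrow> complex \<Rightarrow> complex" where
  "Dfun c n = (c-2)*c*n*(n+1)*(c+n-1)*(c+n)"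

definition delta0 :: "complex \<Rightarrow> complex \<Rightarrow> complex \<Rightarrow> complex \<Rightarrow> complex \<Rightarrow> complex" where
  "delta0 a b c p n =
    (2*(n-1)^2*(a*(c-2*b)+c*(b+c-3)) + 4*(c-2)*(n-1)*(c*(a+b)-a*b) + 2*a*b*(c-2)*(c+1))
    / ((c-2)*c*(n+1)*(c+n))"

definition delta1 :: "complex \<Rightarrow> complex \<Rightarrow> complex \<Rightarrow> complex \<Rightarrow> complex \<Rightarrow> complex" where
  "delta1 a b c p n = (1 / Dfun c n) * (
     - ((n-4)*(n-3)*(n-2)*(n-1)*(a^2+4*c*(a+b)-10*a*b+b^2+c^2-6*c-4*p^2-1))
     + 2*(n-3)*(n-2)*(n-1)*(a^2*(4*b-3*c) + a*(2*(b-1)*c+4*b*(b+3)-3*c^2)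
         - c*(b*(3*b+3*c+2)+c-4*p^2-13))
     + (n-2)*(n-1)*(a^2*(8*b^2+b*(4*c+6)-6*c^2+c)
         + a*(- ((10*b+7)*c^2)+4*(b*(b+3)+3)*c+6*b*(b+1))
         + c*(b^2*(1-6*c)+b*(12-7*c)+6*(c-2)*p^2+c+11))
     + (c-2)*(a^2*b*(c-b*(c+2))+a*b*(b+1)*c+c^2*(c+1)*p^2)
     + 2*(n-1)*(a^2*b*(b*(4*c-2)-3*(c-1)*c) - a*b*c*(3*b*(c-1)+c-5) + (c-2)*c*(c+1)*p^2))"

definition delta2 :: "complex \<Rightarrow> complex \<Rightarrow> complex \<Rightarrow> complex \<Rightarrow> complex \<Rightarrow> complex" where
  "delta2 a b c p n = (2 / Dfun c n) * (
       (n-5)*(n-4)*(n-3)*(n-2)*(a^2+a*(c-4*b)+(b-1)*(b+c+1)-8*p^2)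
     + (n-4)*(n-3)*(n-2)*(a^3+a^2*(-5*b+3*c+2) - a*(b*(5*b-2*c+14)-3*c+4*p^2+1)
         + (b+3*c+1)*(b^2+b-4*p^2-2))
     - (n-3)*(n-2)*(a^3*(b-2*c) + a^2*(b*(10*b+9)-4*(b+1)*c)
         + a*(b*(b+1)*(b-4*c+8)+6*c*p^2+2*c)
         + 2*c*(- (b^3)-2*b^2+3*p^2*(b+c-3)+b+2))
     - (n-2)*(a^3*b*(4*b-3*c+2) + a^2*b*(2*b+1)*(2*b-c)
         - a*(p^2*(10*b-3*c^2+c)+(b-1)*b*(b*(3*c-2)+4*c-2))
         + c*p^2*(b*(3*c-1)+c^2-9))
     - (c+1)*p^2*(c^2*(2*a+2*b+1)-3*(a+1)*(b+1)*c+4*a*b)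
     - (a-1)*a*(b-1)*b*(- (c*(a+b+1))+2*a*b+a+b+1))"

definition delta3 :: "complex \<Rightarrow> complex \<Rightarrow> complex \<Rightarrow> complex \<Rightarrow> complex \<Rightarrow> complex" where
  "delta3 a b c p n = - ((1 / Dfun c n) * (
       (n-6)*(n-5)*(n-4)*(n-3)*((a-b)^2-24*p^2-1)
     + 2*(n-5)*(n-4)*(n-3)*(a^3 - a^2*(b-2) - a*(b*(b+4)+12*p^2+1) + b^3 + 2*b^2
         - 12*p^2*(b+c+1) - b - 2)
     + (n-4)*(n-3)*(a^4 + a^3*(2*b+3) - a^2*(6*b^2+3*b+6*p^2-1)
         + a*(-12*p^2*(b+2*c)+b*(b*(2*b-3)-8)-3)
         - 6*p^2*(b^2+4*b*c+(c-6)*c-1) + (b+1)^2*(b^2+b-2) + 8*p^4)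
     + 2*(n-3)*(- (p^2*(c^2*(3*a+3*b+1)+c*(a+b)*(3*a+3*b+2)-40*a*b-13*c))
         + a*b*(a-b-1)*(a-b+1)*(a+b) + 4*c*p^4)
     + a^4*(b-1)*b + a^3*b*(-2*b^2+b+1)
     + a^2*(b^4+b^3+p^2*(-12*b^2+2*b*(6*c+5)-6*c^2+c)-3*b^2+b)
     + a*p^2*(- ((6*b+7)*c^2)+4*(b*(3*b+2)+3)*c+2*b*(5*b-11))
     - a*(b-1)^2*b*(b+1)
     + c*p^2*(b^2*(1-6*c)+b*(12-7*c)+5*(c-2)*p^2+c+11)))"

definition delta4 :: "complex \<Rightarrow> complex \<Rightarrow> complex \<Rightarrow> complex \<Rightarrow> complex \<Rightarrow> complex" where
  "delta4 a b c p n = (2*p^2 / Dfun c n) * (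
       -8*(n-7)*(n-6)*(n-5)*(n-4) - 4*(n-6)*(n-5)*(n-4)*(3*(a+b+1)+c)
     + 2*(n-5)*(n-4)*(8*p^2-3*(a+b-1)*(a+b+c+1))
     + (n-4)*(- (a^3) - a^2*(3*b+3*c+2) + a*(b*(-3*b-6*c+46)-3*c+4*p^2+1)
         - (b+3*c+1)*(b^2+b-4*p^2-2))
     + a^3*(3*b-2*c) + a^2*(3*(5-2*b)*b-4*c)
     + a*(p^2*(5*c-6*b)-4*b*c+3*b*(b*(b+5)-4)+2*c)
     + 5*c*p^2*(b+c-3) - 2*(b-1)*(b+1)*(b+2)*c)"

definition delta5 :: "complex \<Rightarrow> complex \<Rightarrow> complex \<Rightarrow> complex \<Rightarrow> complex \<Rightarrow> complex" where
  "delta5 a b c p n = (p^2 / Dfun c n) * (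
       4*(n-8)*(n-7)*(n-6)*(n-5) + 8*(n-7)*(n-6)*(n-5)*(a+b+1)
     + 6*(n-6)*(n-5)*((a+b)^2-8*p^2-1)
     - 2*(n-5)*(- (a^3) - 3*a^2*b - 2*a^2 - 3*a*b^2 + 12*p^2*(a+b+c+1) + 16*a*b + a
         - b^3 - 2*b^2 + b + 2)
     + a^4 + a^3*(3-2*b) + a^2*(b*(6*b-11)-5*p^2+1)
     - a*(2*b^3+11*b^2-2*b*(13*p^2+6)+20*c*p^2+3)
     - 5*p^2*(b^2+4*b*c+(c-6)*c-1) + (b+1)^2*(b^2+b-2) + 4*p^4)"

definition delta6 :: "complex \<Rightarrow> complex \<Rightarrow> complex \<Rightarrow> complex \<Rightarrow> complex \<Rightarrow> complex" where
  "delta6 a b c p n =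
     2*p^4*(5*a^2 + a*(-8*b+5*c+12*n-72) + 5*b^2 + 5*b*c + 12*b*(n-6) + 4*n*(c+4*n)
            - 29*c - 196*n - 8*p^2 + 595) / Dfun c n"

definition delta7 :: "complex \<Rightarrow> complex \<Rightarrow> complex \<Rightarrow> complex \<Rightarrow> complex \<Rightarrow> complex" where
  "delta7 a b c p n =
     p^4*(-5*a^2 + 2*a*(b-4*n+28) - 5*b^2 - 8*b*(n-7) - 8*(n-14)*n + 24*p^2 - 387) / Dfun c n"

definition delta8 :: "complex \<Rightarrow> complex \<Rightarrow> complex \<Rightarrow> complex \<Rightarrow> complex \<Rightarrow> complex" where
  "delta8 a b c p n = - (16*p^6 / Dfun c n)"

definition delta9 :: "complex \<Rightarrow> complex \<Rightarrow> complex \<Rightarrow> complex \<Rightarrow> complex \<Rightarrow> complex" where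
  "delta9 a b c p n = 4*p^6 / Dfun c n"

definition delta :: "complex \<Rightarrow> complex \<Rightarrow> complex \<Rightarrow> complex \<Rightarrow> nat \<Rightarrow> complex \<Rightarrow> complex" where
  "delta a b c p i n =
     [delta0 a b c p n, delta1 a b c p n, delta2 a b c p n, delta3 a b c p n,
      delta4 a b c p n, delta5 a b c p n, delta6 a b c p n, delta7 a b c p n,
      delta8 a b c p n, delta9 a b c p n] ! i"

end

theory Submission imports Defs "HOL-Computational_Algebra.Formal_Power_Series" "HOL-Complex_Analysis.Complex_Analysis" "HOL-Real_Asymp.Real_Asymp" begin

unbundle no vec_syntax
unbundle fps_syntax

definition Rq :: "complex \<Rightarrow> complex \<Rightarrow> complex \<Rightarrow> complex \<Rightarrow> complex \<Rightarrow> complex \<Rightarrow> complex \<Rightarrow> complex \<Rightarrow> complex \<Rightarrow> complex" where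
  "Rq a b c q k G3 G2 G1 G0 = (k+3)*(k+2)*G3 - 2*q*(k+2)*G2 + q^2*G1 - (k+2)*(k+1)*G2 + 2*q*(k+1)*G1 - q^2*G0 + c*(k+3)*G3 - c*q*G2 - (a+b+1)*((k+2)*G2 - q*G1) - a*b*G2"

definition PP0 :: "complex \<Rightarrow> complex \<Rightarrow> complex \<Rightarrow> complex \<Rightarrow> complex \<Rightarrow> complex" where
  "PP0 a b c q n = (n*(c+n-1)*(2*(n-1)^2*(a*(c-2*b)+c*(b+c-3)) + 4*(c-2)*(n-1)*(c*(a+b)-a*b) + 2*a*b*(c-2)*(c+1)))"

definition PP1 :: "complex \<Rightarrow> complex \<Rightarrow> complex \<Rightarrow> complex \<Rightarrow> complex \<Rightarrow> complex" where
  "PP1 a b c q n = ((1) * (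
     - ((n-4)*(n-3)*(n-2)*(n-1)*(a^2+4*c*(a+b)-10*a*b+b^2+c^2-6*c-4*q^2-1))
     + 2*(n-3)*(n-2)*(n-1)*(a^2*(4*b-3*c) + a*(2*(b-1)*c+4*b*(b+3)-3*c^2)
         - c*(b*(3*b+3*c+2)+c-4*q^2-13))
     + (n-2)*(n-1)*(a^2*(8*b^2+b*(4*c+6)-6*c^2+c)
         + a*(- ((10*b+7)*c^2)+4*(b*(b+3)+3)*c+6*b*(b+1))
         + c*(b^2*(1-6*c)+b*(12-7*c)+6*(c-2)*q^2+c+11))
     + (c-2)*(a^2*b*(c-b*(c+2))+a*b*(b+1)*c+c^2*(c+1)*q^2)
     + 2*(n-1)*(a^2*b*(b*(4*c-2)-3*(c-1)*c) - a*b*c*(3*b*(c-1)+c-5) + (c-2)*c*(c+1)*q^2)))"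

definition PP2 :: "complex \<Rightarrow> complex \<Rightarrow> complex \<Rightarrow> complex \<Rightarrow> complex \<Rightarrow> complex" where
  "PP2 a b c q n = ((2) * (
       (n-5)*(n-4)*(n-3)*(n-2)*(a^2+a*(c-4*b)+(b-1)*(b+c+1)-8*q^2)
     + (n-4)*(n-3)*(n-2)*(a^3+a^2*(-5*b+3*c+2) - a*(b*(5*b-2*c+14)-3*c+4*q^2+1)
         + (b+3*c+1)*(b^2+b-4*q^2-2))
     - (n-3)*(n-2)*(a^3*(b-2*c) + a^2*(b*(10*b+9)-4*(b+1)*c)
         + a*(b*(b+1)*(b-4*c+8)+6*c*q^2+2*c)
         + 2*c*(- (b^3)-2*b^2+3*q^2*(b+c-3)+b+2))
     - (n-2)*(a^3*b*(4*b-3*c+2) + a^2*b*(2*b+1)*(2*b-c)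
         - a*(q^2*(10*b-3*c^2+c)+(b-1)*b*(b*(3*c-2)+4*c-2))
         + c*q^2*(b*(3*c-1)+c^2-9))
     - (c+1)*q^2*(c^2*(2*a+2*b+1)-3*(a+1)*(b+1)*c+4*a*b)
     - (a-1)*a*(b-1)*b*(- (c*(a+b+1))+2*a*b+a+b+1)))"

definition PP3 :: "complex \<Rightarrow> complex \<Rightarrow> complex \<Rightarrow> complex \<Rightarrow> complex \<Rightarrow> complex" where
  "PP3 a b c q n = (- ((1) * (
       (n-6)*(n-5)*(n-4)*(n-3)*((a-b)^2-24*q^2-1)
     + 2*(n-5)*(n-4)*(n-3)*(a^3 - a^2*(b-2) - a*(b*(b+4)+12*q^2+1) + b^3 + 2*b^2
         - 12*q^2*(b+c+1) - b - 2)
     + (n-4)*(n-3)*(a^4 + a^3*(2*b+3) - a^2*(6*b^2+3*b+6*q^2-1)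
         + a*(-12*q^2*(b+2*c)+b*(b*(2*b-3)-8)-3)
         - 6*q^2*(b^2+4*b*c+(c-6)*c-1) + (b+1)^2*(b^2+b-2) + 8*q^4)
     + 2*(n-3)*(- (q^2*(c^2*(3*a+3*b+1)+c*(a+b)*(3*a+3*b+2)-40*a*b-13*c))
         + a*b*(a-b-1)*(a-b+1)*(a+b) + 4*c*q^4)
     + a^4*(b-1)*b + a^3*b*(-2*b^2+b+1)
     + a^2*(b^4+b^3+q^2*(-12*b^2+2*b*(6*c+5)-6*c^2+c)-3*b^2+b)
     + a*q^2*(- ((6*b+7)*c^2)+4*(b*(3*b+2)+3)*c+2*b*(5*b-11))
     - a*(b-1)^2*b*(b+1)
     + c*q^2*(b^2*(1-6*c)+b*(12-7*c)+5*(c-2)*q^2+c+11))))"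

definition PP4 :: "complex \<Rightarrow> complex \<Rightarrow> complex \<Rightarrow> complex \<Rightarrow> complex \<Rightarrow> complex" where
  "PP4 a b c q n = ((2*q^2) * (
       -8*(n-7)*(n-6)*(n-5)*(n-4) - 4*(n-6)*(n-5)*(n-4)*(3*(a+b+1)+c)
     + 2*(n-5)*(n-4)*(8*q^2-3*(a+b-1)*(a+b+c+1))
     + (n-4)*(- (a^3) - a^2*(3*b+3*c+2) + a*(b*(-3*b-6*c+46)-3*c+4*q^2+1)
         - (b+3*c+1)*(b^2+b-4*q^2-2))
     + a^3*(3*b-2*c) + a^2*(3*(5-2*b)*b-4*c)
     + a*(q^2*(5*c-6*b)-4*b*c+3*b*(b*(b+5)-4)+2*c)
     + 5*c*q^2*(b+c-3) - 2*(b-1)*(b+1)*(b+2)*c))"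

definition PP5 :: "complex \<Rightarrow> complex \<Rightarrow> complex \<Rightarrow> complex \<Rightarrow> complex \<Rightarrow> complex" where
  "PP5 a b c q n = ((q^2) * (
       4*(n-8)*(n-7)*(n-6)*(n-5) + 8*(n-7)*(n-6)*(n-5)*(a+b+1)
     + 6*(n-6)*(n-5)*((a+b)^2-8*q^2-1)
     - 2*(n-5)*(- (a^3) - 3*a^2*b - 2*a^2 - 3*a*b^2 + 12*q^2*(a+b+c+1) + 16*a*b + a
         - b^3 - 2*b^2 + b + 2)
     + a^4 + a^3*(3-2*b) + a^2*(b*(6*b-11)-5*q^2+1)
     - a*(2*b^3+11*b^2-2*b*(13*q^2+6)+20*c*q^2+3)
     - 5*q^2*(b^2+4*b*c+(c-6)*c-1) + (b+1)^2*(b^2+b-2) + 4*q^4))"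

definition PP6 :: "complex \<Rightarrow> complex \<Rightarrow> complex \<Rightarrow> complex \<Rightarrow> complex \<Rightarrow> complex" where
  "PP6 a b c q n = (2*q^4*(5*a^2 + a*(-8*b+5*c+12*n-72) + 5*b^2 + 5*b*c + 12*b*(n-6) + 4*n*(c+4*n)
            - 29*c - 196*n - 8*q^2 + 595))"

definition PP7 :: "complex \<Rightarrow> complex \<Rightarrow> complex \<Rightarrow> complex \<Rightarrow> complex \<Rightarrow> complex" where
  "PP7 a b c q n = (q^4*(-5*a^2 + 2*a*(b-4*n+28) - 5*b^2 - 8*b*(n-7) - 8*(n-14)*n + 24*q^2 - 387))"

definition PP8 :: "complex \<Rightarrow> complex \<Rightarrow> complex \<Rightarrow> complex \<Rightarrow> complex \<Rightarrow> complex" where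
  "PP8 a b c q n = (- (16*q^6))"

definition PP9 :: "complex \<Rightarrow> complex \<Rightarrow> complex \<Rightarrow> complex \<Rightarrow> complex \<Rightarrow> complex" where
  "PP9 a b c q n = (4*q^6)"

lemma cert_identity:
  fixes a b c q x g0 g1 g2 g3 g4 g5 g6 g7 g8 g9 g10 :: complex
  shows "Dfun c (x+9) * g10 - (PP0 a b c q (x+9) * g9 + PP1 a b c q (x+9) * g8 + PP2 a b c q (x+9) * g7 + PP3 a b c q (x+9) * g6 + PP4 a b c q (x+9) * g5 + PP5 a b c q (x+9) * g4 + PP6 a b c q (x+9) * g3 + PP7 a b c q (x+9) * g2 + PP8 a b c q (x+9) * g1 + PP9 a b c q (x+9) * g0)
   = ((x+9)^2*c^2 - 2*(x+9)^2*c + (x+9)*c^3 - 3*(x+9)*c^2 + 2*(x+9)*c) * (Rq a b c q (x+7) g10 g9 g8 g7) + (4*(x+9)^2*a*b - 2*(x+9)^2*a*c - 2*(x+9)^2*b*c - (x+9)^2*c^2 + 4*(x+9)^2*c + 4*(x+9)*a*b*c - 16*(x+9)*a*b - 3*(x+9)*a*c^2 + 10*(x+9)*a*c - 3*(x+9)*b*c^2 + 10*(x+9)*b*c + 2*(x+9)*c^2*q + 4*(x+9)*c^2 - 4*(x+9)*c*q - 12*(x+9)*c - a*b*c^2 - 4*a*b*c + 16*a*b + 4*a*c^2 - 10*a*c + 4*b*c^2 - 10*b*c + c^3*q - 2*c^2*q - 2*c^2 + 6*c) * (Rq a b c q (x+6) g9 g8 g7 g6) + ((x+9)^2*a^2 -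 6*(x+9)^2*a*b + 2*(x+9)^2*a*c + (x+9)^2*b^2 + 2*(x+9)^2*b*c - 2*(x+9)^2*c - 4*(x+9)^2*q^2 - (x+9)^2 - 4*(x+9)*a^2*b + 3*(x+9)*a^2*c - 7*(x+9)*a^2 - 4*(x+9)*a*b^2 + 2*(x+9)*a*b*c + 8*(x+9)*a*b*q + 34*(x+9)*a*b - 4*(x+9)*a*c*q - 12*(x+9)*a*c + 3*(x+9)*b^2*c - 7*(x+9)*b^2 - 4*(x+9)*b*c*q - 12*(x+9)*b*c - 2*(x+9)*c^2*q - 4*(x+9)*c*q^2 + 8*(x+9)*c*q + 9*(x+9)*c + 28*(x+9)*q^2 + 7*(x+9) - 4*a^2*b^2 + 2*a^2*b*c + 10*a^2*b - 8*a^2*c + 12*a^2 + 2*a*b^2*c + 10*a*b^2 + 4*a*b*c*q - 6*a*b*c - 16*a*b*q - 46*a*b - 3*a*c^2*q + 10*a*c*q + 16*a*c - 8*b^2*c + 12*b^2 - 3*b*c^2*q + 10*b*c*q + 16*b*c + c^2*q^2 + c^2*q + 10*c*q^2 - 6*c*q - 8*c - 48*q^2 - 12) * (Rq a b c q (x+5) g8 g7 g6 g5) + (0 - (x+9)^2*a^2 + 2*(x+9)^2*a*b - (x+9)^2*b^2 + 12*(x+9)^2*q^2 + (x+9)^2 - (x+9)*a^3 + (x+9)*a^2*b + 2*(x+9)*a^2*q + 8*(x+9)*a^2 + (x+9)*a*b^2 - 12*(x+9)*a*b*q - 16*(x+9)*a*b + 4*(x+9)*a*c*q + 4*(x+9)*a*q^2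 + (x+9)*a - (x+9)*b^3 + 2*(x+9)*b^2*q + 8*(x+9)*b^2 + 4*(x+9)*b*c*q + 4*(x+9)*b*q^2 + (x+9)*b + 8*(x+9)*c*q^2 - 4*(x+9)*c*q - 8*(x+9)*q^3 - 112*(x+9)*q^2 - 2*(x+9)*q - 8*(x+9) - a^3*b + 4*a^3 + 2*a^2*b^2 - 4*a^2*b*q - 4*a^2*b + 3*a^2*c*q - 8*a^2*q - 16*a^2 - a*b^3 - 4*a*b^2*q - 4*a*b^2 + 2*a*b*c*q + 8*a*b*q^2 + 28*a*b*q + 33*a*b - 2*a*c*q^2 - 8*a*c*q - 16*a*q^2 - 4*a + 4*b^3 + 3*b^2*c*q - 8*b^2*q - 16*b^2 - 2*b*c*q^2 - 8*b*c*q - 16*b*q^2 - 4*b - c^2*q^2 - 4*c*q^3 - 32*c*q^2 + 5*c*q + 32*q^3 + 256*q^2 + 8*q + 16) * (Rq a b c q (x+4) g7 g6 g5 g4) + (0 - 12*(x+9)^2*q^2 - 2*(x+9)*a^2*q + 4*(x+9)*a*b*q - 8*(x+9)*a*q^2 - 2*(x+9)*b^2*q - 8*(x+9)*b*q^2 - 4*(x+9)*c*q^2 + 24*(x+9)*q^3 + 140*(x+9)*q^2 + 2*(x+9)*q - a^3*q + a^2*b*q + a^2*q^2 + 7*a^2*q + a*b^2*q - 14*a*b*q^2 - 14*a*b*q + 2*a*c*q^2 + 4*a*q^3 + 44*a*q^2 + a*q - b^3*q + b^2*q^2 + 7*b^2*q + 2*b*c*q^2 + 4*b*q^3 + 44*b*q^2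 + b*q + 8*c*q^3 + 22*c*q^2 - 4*q^4 - 124*q^3 - 405*q^2 - 7*q) * (Rq a b c q (x+3) g6 g5 g4 g3) + (4*(x+9)^2*q^2 + 4*(x+9)*a*q^2 + 4*(x+9)*b*q^2 - 24*(x+9)*q^3 - 56*(x+9)*q^2 - a^2*q^2 + 6*a*b*q^2 - 8*a*q^3 - 28*a*q^2 - b^2*q^2 - 8*b*q^3 - 28*b*q^2 - 4*c*q^3 + 12*q^4 + 152*q^3 + 197*q^2) * (Rq a b c q (x+2) g5 g4 g3 g2) + (8*(x+9)*q^3 + 4*a*q^3 + 4*b*q^3 - 12*q^4 - 60*q^3) * (Rq a b c q (x+1) g4 g3 g2 g1) + (4*q^4) * (Rq a b c q x g3 g2 g1 g0)"
  unfolding Dfun_def Rq_def PP0_def PP1_def PP2_def PP3_def PP4_def PP5_def PP6_def PP7_def PP8_def PP9_def by algebra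

lemma cert_rec:
  fixes a b c q x g0 g1 g2 g3 g4 g5 g6 g7 g8 g9 g10 :: complex
  assumes "Rq a b c q (x+7) g10 g9 g8 g7 = 0"
    and "Rq a b c q (x+6) g9 g8 g7 g6 = 0"
    and "Rq a b c q (x+5) g8 g7 g6 g5 = 0"
    and "Rq a b c q (x+4) g7 g6 g5 g4 = 0"
    and "Rq a b c q (x+3) g6 g5 g4 g3 = 0"
    and "Rq a b c q (x+2) g5 g4 g3 g2 = 0"
    and "Rq a b c q (x+1) g4 g3 g2 g1 = 0"
    and "Rq a b c q x g3 g2 g1 g0 = 0"
  shows "Dfun c (x+9) * g10 = PP0 a b c q (x+9) * g9 + PP1 a b c q (x+9) * g8 + PP2 a b c q (x+9) * g7 + PP3 a b c q (x+9) * g6 + PP4 a b c q (x+9) * g5 + PP5 a b c q (x+9) * g4 + PP6 a b c q (x+9) * g3 + PP7 a b c q (x+9) * g2 + PP8 a b c q (x+9) * g1 + PP9 a b c q (x+9) * g0"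
  using cert_identity[of c x g10 a b q g9 g8 g7 g6 g5 g4 g3 g2 g1 g0] assms by simp

lemma delta0_mul:
  assumes "Dfun c n \<noteq> 0" "(c-2)*c*(n+1)*(c+n) \<noteq> 0"
  shows "Dfun c n * delta0 a b c q n = PP0 a b c q n"
  using assms unfolding delta0_def PP0_def Dfun_def by (simp add: field_simps)

lemma delta1_mul:
  assumes "Dfun c n \<noteq> 0" "(c-2)*c*(n+1)*(c+n) \<noteq> 0"
  shows "Dfun c n * delta1 a b c q n = PP1 a b c q n"
  using assms unfolding delta1_def PP1_def by (simp add: field_simps)

lemma delta2_mul:
  assumes "Dfun c n \<noteq> 0" "(c-2)*c*(n+1)*(c+n) \<noteq> 0"
  shows "Dfun c n * delta2 a b c q n = PP2 a b c q n"
  using assms unfolding delta2_def PP2_def by (simp add: field_simps)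

lemma delta3_mul:
  assumes "Dfun c n \<noteq> 0" "(c-2)*c*(n+1)*(c+n) \<noteq> 0"
  shows "Dfun c n * delta3 a b c q n = PP3 a b c q n"
  using assms unfolding delta3_def PP3_def by (simp add: field_simps)

lemma delta4_mul:
  assumes "Dfun c n \<noteq> 0" "(c-2)*c*(n+1)*(c+n) \<noteq> 0"
  shows "Dfun c n * delta4 a b c q n = PP4 a b c q n"
  using assms unfolding delta4_def PP4_def by (simp add: field_simps)

lemma delta5_mul:
  assumes "Dfun c n \<noteq> 0" "(c-2)*c*(n+1)*(c+n) \<noteq> 0"
  shows "Dfun c n * delta5 a b c q n = PP5 a b c q n"
  using assms unfolding delta5_def PP5_def by (simp add: field_simps)

lemma delta6_mul:
  assumes "Dfun c n \<noteq> 0" "(c-2)*c*(n+1)*(c+n) \<noteq> 0"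
  shows "Dfun c n * delta6 a b c q n = PP6 a b c q n"
  using assms unfolding delta6_def PP6_def by (simp add: field_simps)

lemma delta7_mul:
  assumes "Dfun c n \<noteq> 0" "(c-2)*c*(n+1)*(c+n) \<noteq> 0"
  shows "Dfun c n * delta7 a b c q n = PP7 a b c q n"
  using assms unfolding delta7_def PP7_def by (simp add: field_simps)

lemma delta8_mul:
  assumes "Dfun c n \<noteq> 0" "(c-2)*c*(n+1)*(c+n) \<noteq> 0"
  shows "Dfun c n * delta8 a b c q n = PP8 a b c q n"
  using assms unfolding delta8_def PP8_def by (simp add: field_simps)

lemma delta9_mul:
  assumes "Dfun c n \<noteq> 0" "(c-2)*c*(n+1)*(c+n) \<noteq> 0"
  shows "Dfun c n * delta9 a b c q n = PP9 a b c q n"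
  using assms unfolding delta9_def PP9_def by (simp add: field_simps)

definition hf :: "complex \<Rightarrow> complex \<Rightarrow> complex \<Rightarrow> nat \<Rightarrow> complex" where
  "hf a b c k = pochhammer a k * pochhammer b k / (pochhammer c k * fact k)"

definition Gs :: "complex \<Rightarrow> complex \<Rightarrow> complex \<Rightarrow> complex \<Rightarrow> nat \<Rightarrow> complex" where
  "Gs a b c q n = (fps_exp q * Abs_fps (hf a b c)) $ n"

lemma poch_c_nz:
  assumes hc: "\<forall>k::nat. c \<noteq> - of_nat k"
  shows "pochhammer c k \<noteq> (0::complex)"
  using hc by (auto simp: pochhammer_eq_0_iff)

lemma hf_rec:
  assumes hc: "\<forall>k::nat. c \<noteq> - of_nat k"
  shows "(of_nat k + 1) * (of_nat k + c) * hf a b c (Suc k) = (of_nat k + a) * (of_nat k + b) * hf a b c k"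
proof -
  have n1: "pochhammer c k \<noteq> 0" using poch_c_nz[OF hc] .
  have n2: "c + of_nat k \<noteq> 0" using hc by (metis add.commute add_eq_0_iff)
  have n3: "(fact k :: complex) \<noteq> 0" by simp
  have n4: "(1 + of_nat k :: complex) \<noteq> 0" "(of_nat k + 1 :: complex) \<noteq> 0"
    by (metis of_nat_Suc of_nat_eq_0_iff nat.distinct(1) add.commute)+
  have e: "hf a b c (Suc k) = ((a + of_nat k) * (b + of_nat k)) / ((c + of_nat k) * (of_nat k + 1)) * hf a b c k"
    unfolding hf_def pochhammer_rec' fact_Suc of_nat_mult
    using n1 n2 n3 n4 by (simp add: divide_simps)
  show ?thesis unfolding e using n2 n4 by (simp add: divide_simps add_ac mult_ac)
qed

lemma nth_X_dd: "(fps_X * fps_deriv (fps_deriv F)) $ n = of_nat n * (of_nat n + 1) * (F $ (n+1) :: complex)"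
  by (cases n) (simp_all add: algebra_simps)

lemma nth_XX_dd: "(fps_X * (fps_X * fps_deriv (fps_deriv F))) $ n = of_nat n * (of_nat n - 1) * (F $ n :: complex)"
proof (cases n)
  case 0 then show ?thesis by simp
next
  case (Suc m) then show ?thesis by (cases m) (simp_all add: algebra_simps)
qed

lemma nth_X_d: "(fps_X * fps_deriv F) $ n = of_nat n * (F $ n :: complex)"
  by (cases n) (simp_all add: algebra_simps)

lemma hyp_ode:
  fixes a b c :: complex
  assumes hc: "\<forall>k::nat. c \<noteq> - of_nat k"
  defines "F \<equiv> Abs_fps (hf a b c)"
  shows "fps_X * fps_deriv (fps_deriv F) - fps_X * (fps_X * fps_deriv (fps_deriv F))
     + fps_const c * fps_deriv F - fps_const (a+b+1) * (fps_X * fps_deriv F) - fps_const (a*b) * F = 0"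
proof (rule fps_ext)
  fix n
  have "(fps_X * fps_deriv (fps_deriv F) - fps_X * (fps_X * fps_deriv (fps_deriv F))
     + fps_const c * fps_deriv F - fps_const (a+b+1) * (fps_X * fps_deriv F) - fps_const (a*b) * F) $ n
     = (of_nat n + 1) * (of_nat n + c) * hf a b c (Suc n) - (of_nat n + a) * (of_nat n + b) * hf a b c n"
    unfolding fps_sub_nth fps_add_nth nth_X_dd nth_XX_dd nth_X_d fps_mult_left_const_nth fps_deriv_nth
    by (simp add: F_def algebra_simps)
  also have "\<dots> = 0" using hf_rec[OF hc] by simp
  finally show "(fps_X * fps_deriv (fps_deriv F) - fps_X * (fps_X * fps_deriv (fps_deriv F))
     + fps_const c * fps_deriv F - fps_const (a+b+1) * (fps_X * fps_deriv F) - fps_const (a*b) * F) $ n = 0 $ n"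
    by simp
qed

lemma ring_aux1:
  fixes Q G d1 d2 E F1 F2 :: "'a::comm_ring_1"
  assumes "d1 = Q*G + E*F1" "d2 = Q*d1 + Q*(E*F1) + E*F2"
  shows "d2 - Q*d1 - Q*d1 + Q*(Q*G) = E*F2"
  using assms by (simp add: algebra_simps)

lemma ring_aux2:
  fixes X E F F1 F2 C K L :: "'a::comm_ring_1"
  shows "X*(E*F2) - X*(X*(E*F2)) + C*(E*F1) - K*(X*(E*F1)) - L*(E*F)
     = E*(X*F2 - X*(X*F2) + C*F1 - K*(X*F1) - L*F)"
  by (simp add: algebra_simps)

lemma G_ode:
  fixes a b c q :: complex
  assumes hc: "\<forall>k::nat. c \<noteq> - of_nat k"
  defines "F \<equiv> Abs_fps (hf a b c)"
  defines "G \<equiv> fps_exp q * F"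
  defines "A \<equiv> fps_deriv (fps_deriv G) - fps_const q * fps_deriv G - fps_const q * fps_deriv G + fps_const q * (fps_const q * G)"
  defines "B \<equiv> fps_deriv G - fps_const q * G"
  shows "fps_X * A - fps_X * (fps_X * A) + fps_const c * B - fps_const (a+b+1) * (fps_X * B) - fps_const (a*b) * G = 0"
proof -
  define E where "E = fps_exp q"
  have G: "G = E * F" unfolding G_def E_def ..
  have d1: "fps_deriv G = fps_const q * G + E * fps_deriv F"
    unfolding G E_def by (simp add: fps_deriv_mult mult.assoc)
  have d2: "fps_deriv (fps_deriv G) = fps_const q * fps_deriv G + fps_const q * (E * fps_deriv F) + E * fps_deriv (fps_deriv F)"
  proof -
    have "fps_deriv (fps_deriv G) = fps_deriv (fps_const q * G + E * fps_deriv F)" by (simp only: d1)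
    also have "\<dots> = fps_const q * fps_deriv G + (fps_const q * E * fps_deriv F + E * fps_deriv (fps_deriv F))"
      unfolding E_def by (simp only: fps_deriv_add fps_deriv_mult_const_left fps_deriv_mult fps_exp_deriv) (simp add: add_ac)
    finally show ?thesis by (simp add: mult.assoc add.assoc)
  qed
  have A: "A = E * fps_deriv (fps_deriv F)"
    unfolding A_def by (rule ring_aux1[OF d1 d2])
  have B: "B = E * fps_deriv F"
    unfolding B_def d1 by simp
  have "fps_X * A - fps_X * (fps_X * A) + fps_const c * B - fps_const (a+b+1) * (fps_X * B) - fps_const (a*b) * G
     = E * (fps_X * fps_deriv (fps_deriv F) - fps_X * (fps_X * fps_deriv (fps_deriv F))
     + fps_const c * fps_deriv F - fps_const (a+b+1) * (fps_X * fps_deriv F) - fps_const (a*b) * F)"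
    unfolding A B G by (rule ring_aux2)
  also have "\<dots> = 0" using hyp_ode[OF hc] unfolding F_def by simp
  finally show ?thesis .
qed

lemma G_rec:
  assumes hc: "\<forall>k::nat. c \<noteq> - of_nat k"
  shows "Rq a b c q (of_nat k) (Gs a b c q (k+3)) (Gs a b c q (k+2)) (Gs a b c q (k+1)) (Gs a b c q k) = 0"
proof -
  define G where "G = fps_exp q * Abs_fps (hf a b c)"
  define A where "A = fps_deriv (fps_deriv G) - fps_const q * fps_deriv G - fps_const q * fps_deriv G + fps_const q * (fps_const q * G)"
  define B where "B = fps_deriv G - fps_const q * G"
  have ode: "fps_X * A - fps_X * (fps_X * A) + fps_const c * B - fps_const (a+b+1) * (fps_X * B) - fps_const (a*b) * G = 0"
    unfolding A_def B_def G_def by (rule G_ode[OF hc])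
  have "(fps_X * A - fps_X * (fps_X * A) + fps_const c * B - fps_const (a+b+1) * (fps_X * B) - fps_const (a*b) * G) $ (k+2) = 0"
    using ode by simp
  then have "(of_nat k + 3) * (of_nat k + 2) * G $ (k+3) - 2*q*(of_nat k+2) * G $ (k+2) + q^2 * G $ (k+1)
     - ((of_nat k + 2) * (of_nat k + 1) * G $ (k+2) - 2*q*(of_nat k+1) * G $ (k+1) + q^2 * G $ k)
     + c * ((of_nat k + 3) * G $ (k+3) - q * G $ (k+2)) - (a+b+1) * ((of_nat k + 2) * G $ (k+2) - q * G $ (k+1))
     - a*b * G $ (k+2) = 0"
    unfolding A_def B_def fps_sub_nth fps_add_nth fps_X_mult_nth fps_mult_left_const_nth fps_deriv_nth
    by (simp add: algebra_simps numeral_eq_Suc power2_eq_square)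
  then show ?thesis unfolding Rq_def Gs_def G_def[symmetric] by (simp add: algebra_simps)
qed
lemma hf_summable:
  fixes z :: complex
  assumes hc: "\<forall>k::nat. c \<noteq> - of_nat k" and z: "norm z < 1"
  shows "summable (\<lambda>k. norm (hf a b c k * z^k))"
proof -
  define r where "r = norm z"
  define c0 where "c0 = (1 + r) / 2"
  have r0: "0 \<le> r" and r1: "r < 1" using z by (auto simp: r_def)
  have c0: "c0 < 1" "r \<le> c0" "0 \<le> c0" using r0 r1 by (auto simp: c0_def)
  have evc: "eventually (\<lambda>n. norm c < real n) sequentially" by real_asymp
  have ev: "eventually (\<lambda>n. (real n + norm a) * (real n + norm b) * r \<le> c0 * (real n * (real n - norm c))) sequentially"
  proof (cases "r = 0")
    case True
    show ?thesis using evc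
      by eventually_elim (use True c0 in \<open>auto intro!: mult_nonneg_nonneg\<close>)
  next
    case False
    then have rpos: "r > 0" using r0 by auto
    have lim: "((\<lambda>n. (real n + norm a) * (real n + norm b) / (real n * (real n - norm c))) \<longlongrightarrow> 1) sequentially"
      by real_asymp
    have "1 < c0 / r" using rpos r1 by (simp add: c0_def field_simps)
    from order_tendstoD(2)[OF lim this]
    have ev1: "eventually (\<lambda>n. (real n + norm a) * (real n + norm b) / (real n * (real n - norm c)) < c0 / r) sequentially" .
    show ?thesis using ev1 evc
    proof eventually_elim
      case (elim n)
      have pos: "real n * (real n - norm c) > 0" using elim(2) norm_ge_zero[of c]
        by (metis diff_gt_0_iff_gt le_less_trans mult_pos_pos of_nat_0_less_iff zero_less_iff_neq_zero order_less_irrefl less_eq_real_def)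
      from elim(1) pos rpos have "(real n + norm a) * (real n + norm b) * r < c0 * (real n * (real n - norm c))"
        by (simp add: field_simps)
      then show ?case by simp
    qed
  qed
  then obtain N where N: "\<And>n. n \<ge> N \<Longrightarrow> (real n + norm a) * (real n + norm b) * r \<le> c0 * (real n * (real n - norm c))"
    and N2: "\<And>n. n \<ge> N \<Longrightarrow> norm c < real n"
    using evc unfolding eventually_sequentially
    by (metis (no_types, lifting) eventually_conj eventually_sequentially ev evc)
  show ?thesis
  proof (rule summable_ratio_test[OF c0(1)])
    fix n assume n: "n \<ge> N"
    have rec: "(of_nat n + 1) * (of_nat n + c) * hf a b c (Suc n) = (of_nat n + a) * (of_nat n + b) * hf a b c n"
      by (rule hf_rec[OF hc])
    have "norm ((of_nat n + 1) * (of_nat n + c) * hf a b c (Suc n)) = norm ((of_nat n + a) * (of_nat n + b) * hf a b c n)"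
      using rec by simp
    have nn1: "norm (of_nat n + 1 :: complex) = real n + 1"
    proof -
      have "(of_nat n + 1 :: complex) = of_nat (Suc n)" by simp
      then show ?thesis by (simp only: norm_of_nat)
    qed
    then have eq: "(real n + 1) * norm (of_nat n + c) * norm (hf a b c (Suc n)) = norm (of_nat n + a) * norm (of_nat n + b) * norm (hf a b c n)"
      using \<open>norm ((of_nat n + 1) * (of_nat n + c) * hf a b c (Suc n)) = norm ((of_nat n + a) * (of_nat n + b) * hf a b c n)\<close>
      by (simp add: norm_mult)
    have na: "norm (of_nat n + a) \<le> real n + norm a"
      using norm_triangle_ineq[of "of_nat n" a] by simp
    have nb: "norm (of_nat n + b) \<le> real n + norm b"
      using norm_triangle_ineq[of "of_nat n" b] by simp
    have nc: "real n - norm c \<le> norm (of_nat n + c)"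
      using norm_triangle_ineq4[of "of_nat n + c" c] by simp
    have ncpos: "real n - norm c > 0" using N2[OF n] by simp
    have h0: "0 \<le> norm (hf a b c n)" by simp
    have "(real n + 1) * norm (of_nat n + c) * (norm (hf a b c (Suc n)) * r)
        = norm (of_nat n + a) * norm (of_nat n + b) * norm (hf a b c n) * r"
      by (subst eq[symmetric]) (simp add: mult_ac)
    also have "\<dots> \<le> (real n + norm a) * (real n + norm b) * r * norm (hf a b c n)"
      using na nb r0 h0 by (simp add: mult_mono mult_right_mono mult.commute mult.left_commute)
    also have "\<dots> \<le> c0 * (real n * (real n - norm c)) * norm (hf a b c n)"
      using N[OF n] h0 by (rule mult_right_mono)
    also have "\<dots> \<le> c0 * ((real n + 1) * norm (of_nat n + c)) * norm (hf a b c n)"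
    proof -
      have "real n * (real n - norm c) \<le> (real n + 1) * norm (of_nat n + c)"
        using nc ncpos by (intro mult_mono) auto
      then show ?thesis using c0(3) h0 by (intro mult_right_mono mult_left_mono) auto
    qed
    finally have "(real n + 1) * norm (of_nat n + c) * (norm (hf a b c (Suc n)) * r)
       \<le> (real n + 1) * norm (of_nat n + c) * (c0 * norm (hf a b c n))"
      by (simp add: algebra_simps)
    moreover have "(real n + 1) * norm (of_nat n + c) > 0"
      using nc ncpos by (intro mult_pos_pos) auto
    ultimately have "norm (hf a b c (Suc n)) * r \<le> c0 * norm (hf a b c n)"
      by (simp add: mult_le_cancel_left_pos)
    then have "norm (hf a b c (Suc n)) * r * r ^ n \<le> c0 * norm (hf a b c n) * r ^ n"
      using r0 by (simp add: mult_right_mono)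
    then show "norm (norm (hf a b c (Suc n) * z ^ Suc n)) \<le> c0 * norm (norm (hf a b c n * z ^ n))"
      by (simp add: norm_mult norm_power r_def[symmetric] mult_ac abs_mult power_abs abs_of_nonneg[OF r0])
  qed
qed

lemma Gs_nth: "Gs a b c q n = (\<Sum>i\<le>n. q^i / fact i * hf a b c (n - i))"
  unfolding Gs_def fps_mult_nth by (simp add: atLeast0AtMost)

lemma G_sums:
  fixes z :: complex
  assumes hc: "\<forall>k::nat. c \<noteq> - of_nat k" and z: "norm z < 1"
  shows "(\<lambda>n. Gs a b c q n * z^n) sums (exp (q*z) * hyp2F1 a b c z)"
proof -
  have s1: "summable (\<lambda>k. norm ((q*z)^k /\<^sub>R fact k))" by (rule summable_norm_exp)
  have s2: "summable (\<lambda>k. norm (hf a b c k * z^k))" by (rule hf_summable[OF hc z])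
  have cp: "(\<lambda>k. \<Sum>i\<le>k. ((q*z)^i /\<^sub>R fact i) * (hf a b c (k-i) * z^(k-i))) sums
        ((\<Sum>k. (q*z)^k /\<^sub>R fact k) * (\<Sum>k. hf a b c k * z^k))"
    by (rule Cauchy_product_sums[OF s1 s2])
  have e1: "(\<Sum>k. (q*z)^k /\<^sub>R fact k) = exp (q*z)" by (simp add: exp_def)
  have e2: "(\<Sum>k. hf a b c k * z^k) = hyp2F1 a b c z" by (simp add: hyp2F1_def hf_def)
  have e3: "(\<Sum>i\<le>k. ((q*z)^i /\<^sub>R fact i) * (hf a b c (k-i) * z^(k-i))) = Gs a b c q k * z^k" for k
  proof -
    have "(\<Sum>i\<le>k. ((q*z)^i /\<^sub>R fact i) * (hf a b c (k-i) * z^(k-i))) = (\<Sum>i\<le>k. q^i / fact i * hf a b c (k - i) * z^k)"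
    proof (rule sum.cong[OF refl])
      fix i assume "i \<in> {..k}"
      then have ik: "i \<le> k" by simp
      have zk: "z^k = z^i * z^(k-i)" using ik by (simp add: power_add[symmetric])
      show "((q*z)^i /\<^sub>R fact i) * (hf a b c (k-i) * z^(k-i)) = q^i / fact i * hf a b c (k - i) * z^k"
        unfolding zk by (simp add: scaleR_conv_of_real power_mult_distrib field_simps)
    qed
    also have "\<dots> = Gs a b c q k * z^k" unfolding Gs_nth by (simp add: sum_distrib_right)
    finally show ?thesis .
  qed
  show ?thesis using cp unfolding e1 e2 e3 .
qed

lemma u_sums:
  fixes z :: complex
  assumes hc: "\<forall>k::nat. c \<noteq> - of_nat k" and z: "norm z < 1"
  shows "(\<lambda>n. (Gs a b c p n - Gs a b c (-p) n) / 2 * z^n) sums (sinh (p*z) * hyp2F1 a b c z)"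
proof -
  have first: "(\<lambda>n. (Gs a b c p n * z^n - Gs a b c (-p) n * z^n) / 2) sums ((exp (p*z) * hyp2F1 a b c z - exp ((-p)*z) * hyp2F1 a b c z) / 2)"
    by (intro sums_divide sums_diff G_sums[OF hc z])
  have f: "(\<lambda>n. (Gs a b c p n - Gs a b c (-p) n) / 2 * z^n) = (\<lambda>n. (Gs a b c p n * z^n - Gs a b c (-p) n * z^n) / 2)"
    by (simp add: algebra_simps fun_eq_iff)
  have eq2: "sinh (p*z) * hyp2F1 a b c z = (exp (p*z) * hyp2F1 a b c z - exp ((-p)*z) * hyp2F1 a b c z) / 2"
    by (simp add: sinh_def scaleR_conv_of_real field_simps)
  show ?thesis unfolding f eq2 by (rule first)
qed

lemma powser_coeffs_zero:
  fixes w :: "nat \<Rightarrow> complex"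
  assumes h: "\<And>z. norm z < 1 \<Longrightarrow> (\<lambda>n. w n * z^n) sums 0"
  shows "w n = 0"
proof (rule ccontr)
  assume wn: "w n \<noteq> 0"
  show False
  proof (cases "n = 0")
    case True
    have "(\<lambda>n. w n * 0^n) sums 0" using h[of 0] by simp
    then have "w 0 = 0" by simp
    then show False using wn True by simp
  next
    case False
    have sm: "\<And>x. norm (x - 0) < 1 \<Longrightarrow> (\<lambda>n. w n * (x - 0)^n) sums ((\<lambda>_. 0::complex) x)"
      using h by simp
    show False
    proof (rule powser_0_nonzero[of 1 0 w "\<lambda>_. 0" n])
      show "0 < (1::real)" by simp
      show "\<And>x. norm (x - 0) < 1 \<Longrightarrow> (\<lambda>n. w n * (x - 0)^n) sums ((\<lambda>_. 0::complex) x)" by (rule sm)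
      show "(\<lambda>_. 0::complex) 0 = 0" by simp
      show "w n \<noteq> 0" by (rule wn)
      show "0 < n" using False by simp
      show False if "0 < s" and "\<And>z::complex. z \<in> cball 0 s - {0} \<Longrightarrow> (\<lambda>_. 0::complex) z \<noteq> 0" for s :: real
        using that(2)[of "complex_of_real s"] that(1) by auto
    qed
  qed
qed

lemma u_eq:
  fixes u :: "nat \<Rightarrow> complex"
  assumes hc: "\<forall>k::nat. c \<noteq> - of_nat k"
    and hu: "\<forall>z::complex. norm z < 1 \<longrightarrow> (\<lambda>n. u n * z ^ n) sums (sinh (p * z) * hyp2F1 a b c z)"
  shows "u n = (Gs a b c p n - Gs a b c (-p) n) / 2"
proof -
  have "u n - (Gs a b c p n - Gs a b c (-p) n) / 2 = 0"
  proof (rule powser_coeffs_zero[where w = "\<lambda>n. u n - (Gs a b c p n - Gs a b c (-p) n) / 2"])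
    fix z :: complex assume z: "norm z < 1"
    have "(\<lambda>n. u n * z^n - (Gs a b c p n - Gs a b c (-p) n) / 2 * z^n) sums (sinh (p * z) * hyp2F1 a b c z - sinh (p * z) * hyp2F1 a b c z)"
      by (intro sums_diff u_sums[OF hc z]) (use hu z in auto)
    then show "(\<lambda>n. (u n - (Gs a b c p n - Gs a b c (-p) n) / 2) * z^n) sums 0"
      by (simp add: algebra_simps)
  qed
  then show ?thesis by simp
qed
lemma sum1: "(\<Sum>i\<le>(1::nat). f i) = f 0 + f 1 + (0::complex)"
  by (simp add: atMost_Suc numeral_eq_Suc add_ac)

lemma sum2: "(\<Sum>i\<le>(2::nat). f i) = f 0 + f 1 + f 2 + (0::complex)"
  by (simp add: atMost_Suc numeral_eq_Suc add_ac)

lemma sum3: "(\<Sum>i\<le>(3::nat). f i) = f 0 + f 1 + f 2 + f 3 + (0::complex)"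
  by (simp add: atMost_Suc numeral_eq_Suc add_ac)

lemma sum4: "(\<Sum>i\<le>(4::nat). f i) = f 0 + f 1 + f 2 + f 3 + f 4 + (0::complex)"
  by (simp add: atMost_Suc numeral_eq_Suc add_ac)

lemma sum5: "(\<Sum>i\<le>(5::nat). f i) = f 0 + f 1 + f 2 + f 3 + f 4 + f 5 + (0::complex)"
  by (simp add: atMost_Suc numeral_eq_Suc add_ac)

lemma sum6: "(\<Sum>i\<le>(6::nat). f i) = f 0 + f 1 + f 2 + f 3 + f 4 + f 5 + f 6 + (0::complex)"
  by (simp add: atMost_Suc numeral_eq_Suc add_ac)

lemma sum7: "(\<Sum>i\<le>(7::nat). f i) = f 0 + f 1 + f 2 + f 3 + f 4 + f 5 + f 6 + f 7 + (0::complex)"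
  by (simp add: atMost_Suc numeral_eq_Suc add_ac)

lemma sum8: "(\<Sum>i\<le>(8::nat). f i) = f 0 + f 1 + f 2 + f 3 + f 4 + f 5 + f 6 + f 7 + f 8 + (0::complex)"
  by (simp add: atMost_Suc numeral_eq_Suc add_ac)

lemma sum10: "(\<Sum>i\<le>(9::nat). f i) = f 0 + f 1 + f 2 + f 3 + f 4 + f 5 + f 6 + f 7 + f 8 + (f 9 :: complex)"
  by (simp add: atMost_Suc numeral_eq_Suc add_ac)

lemma delta_neg: "delta a b c (-p) i n = delta a b c p i n"
  unfolding delta_def delta0_def delta1_def delta2_def delta3_def delta4_def delta5_def
    delta6_def delta7_def delta8_def delta9_def by simp

lemma u_formula: "(Gs a b c p n - Gs a b c (-p) n) / 2 = (\<Sum>i\<le>n. (if odd i then p^i / fact i else 0) * hf a b c (n - i))"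
proof -
  have "(Gs a b c p n - Gs a b c (-p) n) / 2 = (\<Sum>i\<le>n. (p^i / fact i * hf a b c (n - i) - (-p)^i / fact i * hf a b c (n - i)) / 2)"
    unfolding Gs_nth by (simp only: sum_divide_distrib[symmetric] sum_subtractf)
  also have "\<dots> = (\<Sum>i\<le>n. (if odd i then p^i / fact i else 0) * hf a b c (n - i))"
    by (rule sum.cong) auto
  finally show ?thesis .
qed

lemma G_delta:
  fixes a b c q :: complex
  assumes hc: "\<forall>k::nat. c \<noteq> - of_nat k" and hc2: "c \<noteq> 2"
  shows "Gs a b c q (m+10) = (\<Sum>i\<le>9. delta a b c q i (of_nat m + 9) * Gs a b c q (m + 9 - i))"
proof -
  define x where "x = (of_nat m :: complex)"
  have c0: "c \<noteq> 0" using hc[rule_format, of 0] by simp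
  have c2: "c - 2 \<noteq> 0" using hc2 by simp
  have x9: "x + 9 \<noteq> 0"
  proof -
    have "x + 9 = of_nat (m + 9)" by (simp add: x_def)
    then show ?thesis by (metis of_nat_eq_0_iff add_is_0 zero_neq_numeral)
  qed
  have x10: "x + 9 + 1 \<noteq> 0"
  proof -
    have "x + 9 + 1 = of_nat (m + 10)" by (simp add: x_def)
    then show ?thesis by (metis of_nat_eq_0_iff add_is_0 zero_neq_numeral)
  qed
  have cx8: "c + (x + 9) - 1 \<noteq> 0"
  proof -
    have "c + (x + 9) - 1 = c + of_nat (m + 8)" by (simp add: x_def)
    moreover have "c \<noteq> - of_nat (m + 8)" using hc by blast
    ultimately show ?thesis by (metis add_eq_0_iff2)
  qed
  have cx9: "c + (x + 9) \<noteq> 0"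
  proof -
    have "c + (x + 9) = c + of_nat (m + 9)" by (simp add: x_def)
    moreover have "c \<noteq> - of_nat (m + 9)" using hc by blast
    ultimately show ?thesis by (metis add_eq_0_iff2)
  qed
  have D: "Dfun c (x + 9) \<noteq> 0" unfolding Dfun_def using c0 c2 x9 x10 cx8 cx9 by simp
  have D0: "(c-2)*c*((x+9)+1)*(c+(x+9)) \<noteq> 0" using c0 c2 x10 cx9 by simp
  have idx: "m + 1 + 1 = m + 2" "m + 1 + 2 = m + 3" "m + 1 + 3 = m + 4" "m + 2 + 1 = m + 3" "m + 2 + 2 = m + 4" "m + 2 + 3 = m + 5" "m + 3 + 1 = m + 4" "m + 3 + 2 = m + 5" "m + 3 + 3 = m + 6" "m + 4 + 1 = m + 5" "m + 4 + 2 = m + 6" "m + 4 + 3 = m + 7" "m + 5 + 1 = m + 6" "m + 5 + 2 = m + 7" "m + 5 + 3 = m + 8" "m + 6 + 1 = m + 7" "m + 6 + 2 = m + 8" "m + 6 + 3 = m + 9" "m + 7 + 1 = m + 8" "m + 7 + 2 = m + 9" "m + 7 + 3 = m + 10"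
    by simp_all
  have ofn: "of_nat (m + 1) = x + 1" "of_nat (m + 2) = x + 2" "of_nat (m + 3) = x + 3" "of_nat (m + 4) = x + 4" "of_nat (m + 5) = x + 5" "of_nat (m + 6) = x + 6" "of_nat (m + 7) = x + 7"
    by (simp_all add: x_def)
  have R7: "Rq a b c q (x+7) (Gs a b c q (m+10)) (Gs a b c q (m+9)) (Gs a b c q (m+8)) (Gs a b c q (m+7)) = 0"
    using G_rec[OF hc, where a=a and b=b and q=q and k="m+7"] unfolding idx ofn .
  have R6: "Rq a b c q (x+6) (Gs a b c q (m+9)) (Gs a b c q (m+8)) (Gs a b c q (m+7)) (Gs a b c q (m+6)) = 0"
    using G_rec[OF hc, where a=a and b=b and q=q and k="m+6"] unfolding idx ofn .
  have R5: "Rq a b c q (x+5) (Gs a b c q (m+8)) (Gs a b c q (m+7)) (Gs a b c q (m+6)) (Gs a b c q (m+5)) = 0"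
    using G_rec[OF hc, where a=a and b=b and q=q and k="m+5"] unfolding idx ofn .
  have R4: "Rq a b c q (x+4) (Gs a b c q (m+7)) (Gs a b c q (m+6)) (Gs a b c q (m+5)) (Gs a b c q (m+4)) = 0"
    using G_rec[OF hc, where a=a and b=b and q=q and k="m+4"] unfolding idx ofn .
  have R3: "Rq a b c q (x+3) (Gs a b c q (m+6)) (Gs a b c q (m+5)) (Gs a b c q (m+4)) (Gs a b c q (m+3)) = 0"
    using G_rec[OF hc, where a=a and b=b and q=q and k="m+3"] unfolding idx ofn .
  have R2: "Rq a b c q (x+2) (Gs a b c q (m+5)) (Gs a b c q (m+4)) (Gs a b c q (m+3)) (Gs a b c q (m+2)) = 0"
    using G_rec[OF hc, where a=a and b=b and q=q and k="m+2"] unfolding idx ofn .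
  have R1: "Rq a b c q (x+1) (Gs a b c q (m+4)) (Gs a b c q (m+3)) (Gs a b c q (m+2)) (Gs a b c q (m+1)) = 0"
    using G_rec[OF hc, where a=a and b=b and q=q and k="m+1"] unfolding idx ofn .
  have R0: "Rq a b c q x (Gs a b c q (m+3)) (Gs a b c q (m+2)) (Gs a b c q (m+1)) (Gs a b c q m) = 0"
    using G_rec[OF hc, where a=a and b=b and q=q and k="m"] unfolding x_def .
  have cr: "Dfun c (x+9) * Gs a b c q (m+10) =
     PP0 a b c q (x+9) * Gs a b c q (m+9) + PP1 a b c q (x+9) * Gs a b c q (m+8)
   + PP2 a b c q (x+9) * Gs a b c q (m+7) + PP3 a b c q (x+9) * Gs a b c q (m+6)
   + PP4 a b c q (x+9) * Gs a b c q (m+5) + PP5 a b c q (x+9) * Gs a b c q (m+4)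
   + PP6 a b c q (x+9) * Gs a b c q (m+3) + PP7 a b c q (x+9) * Gs a b c q (m+2)
   + PP8 a b c q (x+9) * Gs a b c q (m+1) + PP9 a b c q (x+9) * Gs a b c q m"
    by (rule cert_rec[OF R7 R6 R5 R4 R3 R2 R1 R0])
  have "Dfun c (x+9) * (\<Sum>i\<le>9. delta a b c q i (x + 9) * Gs a b c q (m + 9 - i))
     = (\<Sum>i\<le>9. (Dfun c (x+9) * delta a b c q i (x + 9)) * Gs a b c q (m + 9 - i))"
    by (simp add: sum_distrib_left mult.assoc)
  also have "\<dots> = Dfun c (x+9) * Gs a b c q (m+10)"
    unfolding sum10 cr
    by (simp add: delta_def delta0_mul[OF D D0] delta1_mul[OF D D0] delta2_mul[OF D D0]
        delta3_mul[OF D D0] delta4_mul[OF D D0] delta5_mul[OF D D0] delta6_mul[OF D D0]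
        delta7_mul[OF D D0] delta8_mul[OF D D0] delta9_mul[OF D D0] add_ac)
  finally show ?thesis using D unfolding x_def by simp
qed

theorem theorem3p10:
  fixes a b c p :: complex and u :: "nat \<Rightarrow> complex"
  assumes hc: "\<forall>k::nat. c \<noteq> - of_nat k"
    and hc2: "c \<noteq> 2"
    and hu: "\<forall>z::complex. norm z < 1 \<longrightarrow>
               (\<lambda>n. u n * z ^ n) sums (sinh (p * z) * hyp2F1 a b c z)"
  shows "(u 0 = 0) \<and>
    (u 1 = p) \<and>
    (u 2 = a*b*p / c) \<and>
    (u 3 = pochhammer a 2 * pochhammer b 2 * p / (2 * pochhammer c 2) + p^3 / 6) \<and>
    (u 4 = a*b*p^3 / (6*c) + pochhammer a 3 * pochhammer b 3 * p / (6 * pochhammer c 3)) \<and>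
    (u 5 = pochhammer a 2 * pochhammer b 2 * p^3 / (12 * pochhammer c 2)
             + pochhammer a 4 * pochhammer b 4 * p / (24 * pochhammer c 4) + p^5 / 120) \<and>
    (u 6 = a*b*p^5 / (120*c)
             + pochhammer a 3 * pochhammer b 3 * p^3 / (36 * pochhammer c 3)
             + pochhammer a 5 * pochhammer b 5 * p / (120 * pochhammer c 5)) \<and>
    (u 7 = pochhammer a 2 * pochhammer b 2 * p^5 / (240 * pochhammer c 2)
             + pochhammer a 4 * pochhammer b 4 * p^3 / (144 * pochhammer c 4)
             + pochhammer a 6 * pochhammer b 6 * p / (720 * pochhammer c 6) + p^7 / 5040) \<and>
    (u 8 = a*b*p^7 / (5040*c)
             + pochhammer a 3 * pochhammer b 3 * p^5 / (720 * pochhammer c 3)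
             + pochhammer a 5 * pochhammer b 5 * p^3 / (720 * pochhammer c 5)
             + pochhammer a 7 * pochhammer b 7 * p / (5040 * pochhammer c 7)) \<and>
    (u 9 = pochhammer a 2 * pochhammer b 2 * p^7 / (10080 * pochhammer c 2)
             + pochhammer a 4 * pochhammer b 4 * p^5 / (2880 * pochhammer c 4)
             + pochhammer a 6 * pochhammer b 6 * p^3 / (4320 * pochhammer c 6)
             + pochhammer a 8 * pochhammer b 8 * p / (40320 * pochhammer c 8) + p^9 / 362880) \<and>
    (\<forall>n\<ge>9. u (n+1) = (\<Sum>i\<le>9. delta a b c p i (of_nat n) * u (n - i)))"
proof -
  have ue: "u n = (Gs a b c p n - Gs a b c (-p) n) / 2" for n
    by (rule u_eq[OF hc hu])
  have uf: "u n = (\<Sum>i\<le>n. (if odd i then p^i / fact i else 0) * hf a b c (n - i))" for n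
    unfolding ue u_formula ..
  note nz = poch_c_nz[OF hc, of 1] poch_c_nz[OF hc, of 2] poch_c_nz[OF hc, of 3] poch_c_nz[OF hc, of 4]
     poch_c_nz[OF hc, of 5] poch_c_nz[OF hc, of 6] poch_c_nz[OF hc, of 7] poch_c_nz[OF hc, of 8]
  have c0: "c \<noteq> 0" using hc[rule_format, of 0] by simp
  have i0: "u 0 = 0" unfolding uf by simp
  have i1: "u 1 = p" unfolding uf using nz c0 by (simp add: sum1 hf_def)
  have i2: "u 2 = a*b*p / c" unfolding uf using nz c0 by (simp add: sum2 hf_def fact_numeral field_simps)
  have i3: "u 3 = pochhammer a 2 * pochhammer b 2 * p / (2 * pochhammer c 2) + p^3 / 6"
    unfolding uf using nz c0 by (simp add: sum3 hf_def fact_numeral field_simps)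
  have i4: "u 4 = a*b*p^3 / (6*c) + pochhammer a 3 * pochhammer b 3 * p / (6 * pochhammer c 3)"
    unfolding uf using nz c0 by (simp add: sum4 hf_def fact_numeral field_simps)
  have i5: "u 5 = pochhammer a 2 * pochhammer b 2 * p^3 / (12 * pochhammer c 2)
             + pochhammer a 4 * pochhammer b 4 * p / (24 * pochhammer c 4) + p^5 / 120"
    unfolding uf using nz c0 by (simp add: sum5 hf_def fact_numeral field_simps)
  have i6: "u 6 = a*b*p^5 / (120*c)
             + pochhammer a 3 * pochhammer b 3 * p^3 / (36 * pochhammer c 3)
             + pochhammer a 5 * pochhammer b 5 * p / (120 * pochhammer c 5)"
    unfolding uf using nz c0 by (simp add: sum6 hf_def fact_numeral field_simps)
  have i7: "u 7 = pochhammer a 2 * pochhammer b 2 * p^5 / (240 * pochhammer c 2)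
             + pochhammer a 4 * pochhammer b 4 * p^3 / (144 * pochhammer c 4)
             + pochhammer a 6 * pochhammer b 6 * p / (720 * pochhammer c 6) + p^7 / 5040"
    unfolding uf using nz c0 by (simp add: sum7 hf_def fact_numeral field_simps)
  have i8: "u 8 = a*b*p^7 / (5040*c)
             + pochhammer a 3 * pochhammer b 3 * p^5 / (720 * pochhammer c 3)
             + pochhammer a 5 * pochhammer b 5 * p^3 / (720 * pochhammer c 5)
             + pochhammer a 7 * pochhammer b 7 * p / (5040 * pochhammer c 7)"
    unfolding uf using nz c0 by (simp add: sum8 hf_def fact_numeral field_simps)
  have i9: "u 9 = pochhammer a 2 * pochhammer b 2 * p^7 / (10080 * pochhammer c 2)
             + pochhammer a 4 * pochhammer b 4 * p^5 / (2880 * pochhammer c 4)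
             + pochhammer a 6 * pochhammer b 6 * p^3 / (4320 * pochhammer c 6)
             + pochhammer a 8 * pochhammer b 8 * p / (40320 * pochhammer c 8) + p^9 / 362880"
    unfolding uf using nz c0 by (simp add: sum10 hf_def fact_numeral field_simps)
  have rec: "u (n+1) = (\<Sum>i\<le>9. delta a b c p i (of_nat n) * u (n - i))" if n9: "n \<ge> 9" for n
  proof -
    obtain m where m: "n = m + 9" using n9 by (metis add.commute le_Suc_ex)
    have N: "(of_nat n :: complex) = of_nat m + 9" by (simp add: m)
    have gp: "Gs a b c p (m+10) = (\<Sum>i\<le>9. delta a b c p i (of_nat m + 9) * Gs a b c p (m + 9 - i))"
      by (rule G_delta[OF hc hc2])
    have gm: "Gs a b c (-p) (m+10) = (\<Sum>i\<le>9. delta a b c p i (of_nat m + 9) * Gs a b c (-p) (m + 9 - i))"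
      using G_delta[OF hc hc2, where q="-p" and a=a and b=b and m=m] by (simp add: delta_neg)
    have e10: "n + 1 = m + 10" using m by simp
    have "u (n+1) = (Gs a b c p (m+10) - Gs a b c (-p) (m+10)) / 2"
      unfolding e10 ue ..
    also have "\<dots> = (\<Sum>i\<le>9. delta a b c p i (of_nat m + 9) * ((Gs a b c p (m + 9 - i) - Gs a b c (-p) (m + 9 - i)) / 2))"
      unfolding gp gm by (simp add: sum_subtractf[symmetric] sum_divide_distrib algebra_simps)
    also have "\<dots> = (\<Sum>i\<le>9. delta a b c p i (of_nat n) * u (n - i))"
      unfolding ue by (simp add: m)
    finally show ?thesis .
  qed
  show ?thesis using i0 i1 i2 i3 i4 i5 i6 i7 i8 i9 rec by blast
qed

end
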